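(* Let $V$ be a finite-dimensional real vector space, $\Gamma$ a semigroup with identity $e$, and $\rho:\Gamma\to\mathrm{End}(V)$ an expansive endomorphism action with $\rho(e)=\mathrm{Id}$. Then there exists a finitely generated subsemigroup $\Gamma_0\subset\Gamma$ (containing $e$) whose action on $V$ (restriction of $\rho$) is expansive.
   Context: The action is expansive if there is a neighborhood $U$ of $0$ in $V$ with $\bigcap_{\gamma}\rho(\gamma)^{-1}(U)=\{0\}$; equivalently, every non-zero vector has an unbounded orbit. *)

theory Defs
  imports "HOL-Analysis.Analysis"
begin

inductive_set gen_submonoid :: "'g::monoid_mult set \<Rightarrow> 'g set" for F where
  one: "1 \<in> gen_submonoid F"
| gen: "x \<in> F \<Longrightarrow> x \<in> gen_submonoid F"
| mult: "x \<in> gen_submonoid F \<Longrightarrow> y \<in> gen_submonoid F \<Longrightarrow> x * y \<in> gen_submonoid F"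

definition nhd0 :: "'v::real_normed_vector set \<Rightarrow> bool" where
  "nhd0 U \<longleftrightarrow> (\<exists>W. open W \<and> 0 \<in> W \<and> W \<subseteq> U)"

definition expansive_on :: "'g set \<Rightarrow> ('g \<Rightarrow> 'v::real_normed_vector \<Rightarrow> 'v) \<Rightarrow> bool" where
  "expansive_on S \<rho> \<longleftrightarrow> (\<exists>U. nhd0 U \<and> (\<Inter>\<gamma>\<in>S. \<rho> \<gamma> -` U) = {0})"

end

theory Submission
  imports Defs
begin

theorem lemma3p1:
  fixes \<rho> :: "'g::monoid_mult \<Rightarrow> 'v::euclidean_space \<Rightarrow> 'v"
  assumes lin: "\<And>\<gamma>. linear (\<rho> \<gamma>)"
    and hom: "\<And>\<gamma> \<delta>. \<rho> (\<gamma> * \<delta>) = \<rho> \<gamma> \<circ> \<rho> \<delta>"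
    and one: "\<rho> 1 = id"
    and exp: "expansive_on UNIV \<rho>"
  shows "\<exists>F. finite F \<and> expansive_on (gen_submonoid F) \<rho>"
proof -
  have sc: "\<rho> g (c *\<^sub>R v) = c *\<^sub>R \<rho> g v" for g c v
    using lin linear_cmul by blast
  have z: "\<rho> g 0 = 0" for g using lin linear_0 by blast
  obtain U where U: "nhd0 U" and UI: "(\<Inter>\<gamma>\<in>UNIV. \<rho> \<gamma> -` U) = {0}"
    using exp unfolding expansive_on_def by blast
  obtain W where W: "open W" "0 \<in> W" "W \<subseteq> U" using U unfolding nhd0_def by blast
  obtain r where r: "r > 0" "ball 0 r \<subseteq> W" using W open_contains_ball by blast
  have cover: "sphere (0::'v) 1 \<subseteq> (\<Union>\<gamma>\<in>UNIV. {v. norm (\<rho> \<gamma> v) > 2})"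
  proof
    fix v :: 'v assume v: "v \<in> sphere 0 1"
    define w where "w = (r/3) *\<^sub>R v"
    have "w \<noteq> 0" using v r by (auto simp: w_def)
    then have "w \<notin> (\<Inter>\<gamma>\<in>UNIV. \<rho> \<gamma> -` U)" using UI by blast
    then obtain \<gamma> where "\<rho> \<gamma> w \<notin> U" by blast
    then have "\<rho> \<gamma> w \<notin> ball 0 r" using r W by blast
    then have "r \<le> norm (\<rho> \<gamma> w)" by (simp add: dist_norm)
    also have "norm (\<rho> \<gamma> w) = (r/3) * norm (\<rho> \<gamma> v)"
      using r by (simp add: w_def sc)
    finally have "norm (\<rho> \<gamma> v) > 2" using r by (simp add: field_simps)
    then show "v \<in> (\<Union>\<gamma>\<in>UNIV. {v. norm (\<rho> \<gamma> v) > 2})" by blast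
  qed
  have opn: "open {v. norm (\<rho> \<gamma> v) > 2}" for \<gamma>
  proof -
    have "continuous_on UNIV (\<lambda>v. norm (\<rho> \<gamma> v))"
      using lin linear_continuous_on continuous_on_norm
      by (metis linear_conv_bounded_linear)
    then show ?thesis using open_Collect_less[of "\<lambda>_. 2" "\<lambda>v. norm (\<rho> \<gamma> v)"]
      by (simp add: continuous_on_eq_continuous_at)
  qed
  obtain F where F: "finite F" "sphere (0::'v) 1 \<subseteq> (\<Union>\<gamma>\<in>F. {v. norm (\<rho> \<gamma> v) > 2})"
    by (rule compactE_image[OF compact_sphere[of "0::'v" 1] opn cover]) (simp_all)
  have step: "\<exists>\<gamma>\<in>F. norm (\<rho> \<gamma> w) > 2 * norm w" if "w \<noteq> 0" for w
  proof -
    have "(1 / norm w) *\<^sub>R w \<in> sphere 0 1" using that by simp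
    then obtain \<gamma> where g: "\<gamma> \<in> F" "norm (\<rho> \<gamma> ((1 / norm w) *\<^sub>R w)) > 2" using F by blast
    have "norm (\<rho> \<gamma> ((1 / norm w) *\<^sub>R w)) = norm (\<rho> \<gamma> w) / norm w"
      by (simp add: sc divide_inverse mult.commute)
    then have e: "norm (\<rho> \<gamma> w) = norm w * norm (\<rho> \<gamma> ((1 / norm w) *\<^sub>R w))" using that by simp
    have "norm w * 2 < norm w * norm (\<rho> \<gamma> ((1 / norm w) *\<^sub>R w))"
      using g(2) that by (simp add: mult_strict_left_mono)
    then have "norm (\<rho> \<gamma> w) > 2 * norm w" using e by simp
    then show ?thesis using g by blast
  qed
  have iter: "\<exists>g\<in>gen_submonoid F. norm (\<rho> g w) \<ge> 2^n * norm w" if "w \<noteq> 0" for w n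
  proof (induction n)
    case 0
    have "norm (\<rho> 1 w) \<ge> 2^0 * norm w" using one by simp
    then show ?case using gen_submonoid.one[of F] by blast
  next
    case (Suc n)
    then obtain g where g: "g \<in> gen_submonoid F" "norm (\<rho> g w) \<ge> 2^n * norm w" by blast
    have "2^n * norm w > 0" using that by simp
    then have "\<rho> g w \<noteq> 0" using g by auto
    then obtain \<gamma> where h: "\<gamma> \<in> F" "norm (\<rho> \<gamma> (\<rho> g w)) > 2 * norm (\<rho> g w)" using step by blast
    have "\<gamma> * g \<in> gen_submonoid F" using g h by (blast intro: gen_submonoid.intros)
    moreover have "norm (\<rho> (\<gamma> * g) w) \<ge> 2^Suc n * norm w" using h g by (simp add: hom)
    ultimately show ?case by blast
  qed
  have "expansive_on (gen_submonoid F) \<rho>"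
    unfolding expansive_on_def
  proof (intro exI conjI)
    show "nhd0 (ball (0::'v) 1)" unfolding nhd0_def by (intro exI[of _ "ball 0 1"]) auto
    show "(\<Inter>\<gamma>\<in>gen_submonoid F. \<rho> \<gamma> -` ball 0 1) = {0}"
    proof (intro equalityI subsetI)
      fix w assume w: "w \<in> (\<Inter>\<gamma>\<in>gen_submonoid F. \<rho> \<gamma> -` ball 0 1)"
      show "w \<in> {0}"
      proof (rule ccontr)
        assume "w \<notin> {0}"
        then have wn: "w \<noteq> 0" by simp
        obtain n where n: "1 / norm w < 2^n" using real_arch_pow[of "2::real" "1 / norm w"] by auto
        then have "1 \<le> 2^n * norm w" using wn by (simp add: field_simps)
        obtain g where "g \<in> gen_submonoid F" "norm (\<rho> g w) \<ge> 2^n * norm w" using iter[OF wn] by blast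
        then have "1 \<le> norm (\<rho> g w)" using \<open>1 \<le> 2^n * norm w\<close> by linarith
        moreover have "\<rho> g w \<in> ball 0 1" using w \<open>g \<in> gen_submonoid F\<close> by blast
        ultimately show False by (simp add: dist_norm)
      qed
    qed (simp add: z)
  qed
  then show ?thesis using F by blast
qed

end
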